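(* Let $p\ge 7$ be a prime. Then $$\sum_{k=1}^{p-1}\frac{H_k}{k^2}\equiv \sum_{k=1}^{p-1}\frac{H_k^2}{k}\equiv -\frac{3}{p^2}\sum_{k=1}^{p-1}\frac{1}{k}\equiv \frac{3}{2p}\sum_{k=1}^{p-1}\frac{1}{k^2}\pmod{p^2}.$$
   Context: For positive integers $n,m$, $H_{n,m}=\sum_{k=1}^n 1/k^m$ and $H_n=H_{n,1}=\sum_{k=1}^n 1/k$; also $H_0=H_{0,m}=0$. Congruences modulo a prime power $p^e$ are taken in the ring of rational numbers whose denominators are not divisible by $p$: for such rationals $a,b$, $a\equiv b\pmod{p^e}$ means $a-b=p^e c$ with $c$ a rational whose denominator is not divisible by $p$. (The expressions $-\frac{3}{p^2}H_{p-1}$ and $\frac{3}{2p}H_{p-1,2}$ are $p$-integral for $p\ge 7$, since $p^2\mid H_{p-1}$ and $p\mid H_{p-1,2}$.) *)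

theory Defs
  imports Complex_Main "HOL-Computational_Algebra.Primes"
begin

definition harm :: "nat \<Rightarrow> nat \<Rightarrow> rat" where
  "harm n m = (\<Sum>k=1..n. 1 / (of_nat k) ^ m)"

definition p_integral :: "nat \<Rightarrow> rat \<Rightarrow> bool" where
  "p_integral p c \<longleftrightarrow> \<not> (int p dvd snd (quotient_of c))"

definition rat_cong :: "rat \<Rightarrow> rat \<Rightarrow> nat \<Rightarrow> nat \<Rightarrow> bool" where
  "rat_cong a b p e \<longleftrightarrow> (\<exists>c. a - b = (of_nat p) ^ e * c \<and> p_integral p c)"

end

theory Submission
  imports Defs "HOL-Number_Theory.Number_Theory"
begin


locale pp = fixes p :: nat assumes pr: "prime p"
begin

definition pint :: "rat \<Rightarrow> bool" where
  "pint x \<longleftrightarrow> (\<exists>a b. b \<noteq> 0 \<and> \<not> int p dvd b \<and> x = of_int a / of_int b)"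

lemma p_integral_iff: "p_integral p x \<longleftrightarrow> pint x"
proof
  assume h: "p_integral p x"
  obtain a b where q: "quotient_of x = (a,b)" by (cases "quotient_of x")
  have "b > 0" using quotient_of_denom_pos[OF q] .
  moreover have "x = of_int a / of_int b" using quotient_of_div[OF q] .
  moreover have "\<not> int p dvd b" using h q unfolding p_integral_def by simp
  ultimately show "pint x" unfolding pint_def by (intro exI[of _ a] exI[of _ b]) auto
next
  assume "pint x"
  then obtain a b where ab: "b \<noteq> 0" "\<not> int p dvd b" "x = of_int a / of_int b"
    unfolding pint_def by blast
  obtain a' b' where q: "quotient_of x = (a',b')" by (cases "quotient_of x")
  have b'pos: "b' > 0" using quotient_of_denom_pos[OF q] .
  have cop: "coprime a' b'" using quotient_of_coprime[OF q] .
  have "of_int a' / of_int b' = (of_int a / of_int b :: rat)" using quotient_of_div[OF q] ab by simp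
  hence "of_int (a' * b) = (of_int (a * b') :: rat)" using ab(1) b'pos
    by (simp add: field_simps)
  hence eq: "a' * b = a * b'" by (simp only: of_int_eq_iff)
  hence "b' dvd a' * b" by simp
  hence "b' dvd b" using cop by (simp add: coprime_commute coprime_dvd_mult_right_iff)
  hence "\<not> int p dvd b'" using ab(2) dvd_trans by blast
  thus "p_integral p x" unfolding p_integral_def q by simp
qed

lemma p_gt1: "p > 1" using pr prime_gt_1_nat by blast

lemma pint_int[simp]: "pint (of_int z)"
  unfolding pint_def using p_gt1 by (intro exI[of _ z] exI[of _ 1]) auto

lemma pint_nat[simp]: "pint (of_nat z)"
  using pint_int[of "int z"] by simp

lemma pint_0[simp]: "pint 0" and pint_1[simp]: "pint 1"
  using pint_int[of 0] pint_int[of 1] by auto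

lemma pint_numeral[simp]: "pint (numeral n)"
  using pint_nat[of "numeral n"] by simp

lemma prime_int: "prime (int p)" using pr by simp

lemma pint_add[intro]: "pint x \<Longrightarrow> pint y \<Longrightarrow> pint (x + y)"
proof -
  assume "pint x" "pint y"
  then obtain a b c d where h: "b \<noteq> 0" "\<not> int p dvd b" "x = of_int a / of_int b"
     "d \<noteq> 0" "\<not> int p dvd d" "y = of_int c / of_int d" unfolding pint_def by blast
  have "x + y = of_int (a*d + c*b) / of_int (b*d)" using h by (simp add: field_simps)
  moreover have "\<not> int p dvd b*d" using h prime_int by (simp add: prime_dvd_mult_iff)
  ultimately show ?thesis unfolding pint_def using h by (intro exI[of _ "a*d+c*b"] exI[of _ "b*d"]) auto
qed

lemma pint_mult[intro]: "pint x \<Longrightarrow> pint y \<Longrightarrow> pint (x * y)"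
proof -
  assume "pint x" "pint y"
  then obtain a b c d where h: "b \<noteq> 0" "\<not> int p dvd b" "x = of_int a / of_int b"
     "d \<noteq> 0" "\<not> int p dvd d" "y = of_int c / of_int d" unfolding pint_def by blast
  have "x * y = of_int (a*c) / of_int (b*d)" using h by (simp add: field_simps)
  moreover have "\<not> int p dvd b*d" using h prime_int by (simp add: prime_dvd_mult_iff)
  ultimately show ?thesis unfolding pint_def using h by (intro exI[of _ "a*c"] exI[of _ "b*d"]) auto
qed

lemma pint_minus[intro]: "pint x \<Longrightarrow> pint (- x)"
  using pint_mult[of "-1" x] pint_int[of "-1"] by simp

lemma pint_diff[intro]: "pint x \<Longrightarrow> pint y \<Longrightarrow> pint (x - y)"
  using pint_add[of x "-y"] by auto

lemma pint_power[intro]: "pint x \<Longrightarrow> pint (x ^ n)"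
  by (induction n) auto

lemma pint_sum[intro]: "(\<And>i. i \<in> A \<Longrightarrow> pint (f i)) \<Longrightarrow> pint (sum f A)"
  by (induction A rule: infinite_finite_induct) auto

lemma pint_inv_int: "\<not> int p dvd z \<Longrightarrow> pint (1 / of_int z)"
  unfolding pint_def by (intro exI[of _ 1] exI[of _ z]) auto

lemma pint_inv_nat: "0 < k \<Longrightarrow> k < p \<Longrightarrow> pint (1 / of_nat k)"
proof -
  assume "0 < k" "k < p"
  hence "\<not> int p dvd int k" by (auto dest: zdvd_imp_le)
  thus ?thesis using pint_inv_int[of "int k"] by simp
qed

lemma pint_div_nat[intro]: "pint x \<Longrightarrow> 0 < k \<Longrightarrow> k < p \<Longrightarrow> pint (x / of_nat k)"
  using pint_mult[OF _ pint_inv_nat[of k], of x] by simp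

lemma pint_div_nat_pow[intro]: "pint x \<Longrightarrow> 0 < k \<Longrightarrow> k < p \<Longrightarrow> pint (x / of_nat k ^ m)"
  using pint_mult[OF _ pint_power[OF pint_inv_nat[of k]], of x m] by (simp add: power_one_over)

definition Dv :: "nat \<Rightarrow> rat \<Rightarrow> bool" where
  "Dv e x \<longleftrightarrow> pint (x / of_nat p ^ e)"

lemma pnz: "(of_nat p :: rat) \<noteq> 0" using p_gt1 by simp

lemma rat_cong_iff: "rat_cong a b p e \<longleftrightarrow> Dv e (a - b)"
  unfolding rat_cong_def Dv_def p_integral_iff
proof
  assume "\<exists>c. a - b = of_nat p ^ e * c \<and> pint c"
  then obtain c where "a - b = of_nat p ^ e * c" "pint c" by blast
  thus "pint ((a - b) / of_nat p ^ e)" using pnz by simp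
next
  assume "pint ((a - b) / of_nat p ^ e)"
  thus "\<exists>c. a - b = of_nat p ^ e * c \<and> pint c" using pnz
    by (intro exI[of _ "(a - b) / of_nat p ^ e"]) auto
qed

lemma Dv0: "Dv 0 x \<longleftrightarrow> pint x" unfolding Dv_def by simp

lemma Dv_zero[simp]: "Dv e 0" unfolding Dv_def by simp

lemma Dv_add[intro]: "Dv e x \<Longrightarrow> Dv e y \<Longrightarrow> Dv e (x + y)"
  unfolding Dv_def using pint_add by (simp add: add_divide_distrib)

lemma Dv_minus[intro]: "Dv e x \<Longrightarrow> Dv e (- x)"
  unfolding Dv_def using pint_minus by simp

lemma Dv_diff[intro]: "Dv e x \<Longrightarrow> Dv e y \<Longrightarrow> Dv e (x - y)"
  using Dv_add[of e x "-y"] by auto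

lemma Dv_sum[intro]: "(\<And>i. i \<in> A \<Longrightarrow> Dv e (f i)) \<Longrightarrow> Dv e (sum f A)"
  by (induction A rule: infinite_finite_induct) auto

lemma Dv_mult_pint[intro]: "Dv e x \<Longrightarrow> pint c \<Longrightarrow> Dv e (c * x)"
  unfolding Dv_def using pint_mult[of c "x / of_nat p ^ e"] by simp

lemma Dv_mult_pint'[intro]: "Dv e x \<Longrightarrow> pint c \<Longrightarrow> Dv e (x * c)"
  by (metis Dv_mult_pint mult.commute)

lemma Dv_mult[intro]: "Dv e x \<Longrightarrow> Dv f y \<Longrightarrow> Dv (e + f) (x * y)"
  unfolding Dv_def using pint_mult[of "x / of_nat p ^ e" "y / of_nat p ^ f"]
  by (simp add: power_add)

lemma Dv_pow_p[intro]: "Dv e (of_nat p ^ e)"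
  unfolding Dv_def using pnz by simp

lemma Dv_pint: "pint x \<Longrightarrow> Dv 0 x" by (simp add: Dv0)

lemma Dv_div_nat[intro]: "Dv e x \<Longrightarrow> 0 < k \<Longrightarrow> k < p \<Longrightarrow> Dv e (x / of_nat k)"
  unfolding Dv_def using pint_div_nat[of "x / of_nat p ^ e" k] by (simp add: mult.commute)

lemma Dv_mono: "e \<le> f \<Longrightarrow> Dv f x \<Longrightarrow> Dv e x"
proof -
  assume "e \<le> f" "Dv f x"
  then obtain d where "f = e + d" by (metis le_add_diff_inverse)
  hence "x / of_nat p ^ e = (x / of_nat p ^ f) * of_nat (p ^ d)" using pnz
    by (simp add: power_add field_simps)
  thus "Dv e x" using \<open>Dv f x\<close> unfolding Dv_def by (metis pint_mult pint_nat)
qed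

lemma Dv_div_p: "Dv (e + f) x \<Longrightarrow> Dv e (x / of_nat p ^ f)"
  unfolding Dv_def by (simp add: power_add divide_divide_eq_left mult.commute)

lemma Dv_int: "int p dvd z \<Longrightarrow> Dv 1 (of_int z)"
proof -
  assume "int p dvd z" then obtain w where "z = int p * w" by blast
  thus "Dv 1 (of_int z)" unfolding Dv_def using pnz by simp
qed

end

context pp begin

lemma Dv_div_nat_pow[intro]: "Dv e x \<Longrightarrow> 0 < k \<Longrightarrow> k < p \<Longrightarrow> Dv e (x / of_nat k ^ m)"
  unfolding Dv_def using pint_div_nat_pow[of "x / of_nat p ^ e" k m] by (simp add: mult.commute)

lemma powsum: "j < p - 1 \<Longrightarrow> int p dvd (\<Sum>k<p. int k ^ j)"
proof (induction j rule: less_induct)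
  case (less j)
  define S where "S i = (\<Sum>k<p. int k ^ i)" for i
  have bin: "int (Suc k)^(Suc j) - int k^(Suc j) = (\<Sum>i\<le>j. of_nat (Suc j choose i) * int k ^ i)" for k
  proof -
    have "int (Suc k)^(Suc j) = (int k + 1)^(Suc j)" by (simp add: add.commute)
    also have "\<dots> = (\<Sum>i\<le>Suc j. of_nat (Suc j choose i) * int k ^ i)"
      by (subst binomial_ring) simp
    finally show ?thesis by simp
  qed
  have "int p ^ Suc j = (\<Sum>k<p. int (Suc k)^(Suc j) - int k^(Suc j))"
    by (subst sum_lessThan_telescope) simp
  also have "\<dots> = (\<Sum>k<p. \<Sum>i\<le>j. of_nat (Suc j choose i) * int k ^ i)" by (simp only: bin)
  also have "\<dots> = (\<Sum>i\<le>j. of_nat (Suc j choose i) * S i)"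
    unfolding S_def by (subst sum.swap) (simp add: sum_distrib_left)
  also have "\<dots> = (\<Sum>i<j. of_nat (Suc j choose i) * S i) + of_nat (Suc j) * S j"
    by (simp add: lessThan_Suc_atMost[symmetric])
  finally have eq: "of_nat (Suc j) * S j = int p ^ Suc j - (\<Sum>i<j. of_nat (Suc j choose i) * S i)"
    by simp
  have "int p dvd (\<Sum>i<j. of_nat (Suc j choose i) * S i)"
    using less unfolding S_def by (intro dvd_sum) (simp add: dvd_mult)
  hence "int p dvd of_nat (Suc j) * S j" using eq by simp
  moreover have "\<not> int p dvd int (Suc j)" using less by (auto dest: zdvd_imp_le)
  ultimately have "int p dvd S j" using prime_int by (simp add: prime_dvd_mult_iff)
  thus ?case unfolding S_def .
qed

lemma sum_lt_p: "f 0 = 0 \<Longrightarrow> (\<Sum>k<p. f k) = (\<Sum>k=1..p-1. f k)"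
proof -
  assume "f 0 = 0"
  have "{..<p} = insert 0 {1..p-1}" using p_gt1 by auto
  thus ?thesis using \<open>f 0 = 0\<close> by simp
qed

lemma harm_Dv1: assumes "1 \<le> m" "m \<le> p - 2" shows "Dv 1 (harm (p-1) m)"
proof -
  define j where "j = p - 1 - m"
  have j: "1 \<le> j" "j < p - 1" "j + m = p - 1" using assms p_gt1 unfolding j_def by auto
  have t: "Dv 1 (1 / of_nat k ^ m - of_nat (k ^ j))" if k: "k \<in> {1..p-1}" for k
  proof -
    have "\<not> p dvd k" using k by (auto dest: dvd_imp_le)
    hence "[k ^ (p-1) = 1] (mod p)" using fermat_theorem pr by blast
    hence "[int k ^ (p-1) = 1] (mod int p)" using cong_int_iff[of "k^(p-1)" 1 p] by simp
    hence "int p dvd (1 - int k ^ (p-1))" by (metis cong_iff_dvd_diff cong_sym)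
    hence d: "Dv 1 (of_int (1 - int k ^ (p-1)) / of_nat k ^ m)" using k by (intro Dv_div_nat_pow Dv_int) auto
    have "1 / of_nat k ^ m - of_nat (k ^ j) = (of_int (1 - int k ^ (p-1)) / of_nat k ^ m :: rat)"
      using k j(3)[symmetric] by (simp add: field_simps power_add)
    thus ?thesis using d by simp
  qed
  have "Dv 1 (of_int (\<Sum>k<p. int k ^ j))" using powsum j by (intro Dv_int) auto
  also have "(of_int (\<Sum>k<p. int k ^ j) :: rat) = (\<Sum>k=1..p-1. of_nat (k ^ j))"
    using j by (subst sum_lt_p) auto
  finally have "Dv 1 (\<Sum>k=1..p-1. of_nat (k ^ j) :: rat)" .
  moreover have "Dv 1 (\<Sum>k=1..p-1. 1 / of_nat k ^ m - of_nat (k ^ j))" using t by blast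
  ultimately have "Dv 1 ((\<Sum>k=1..p-1. 1 / of_nat k ^ m - of_nat (k ^ j)) + (\<Sum>k=1..p-1. of_nat (k ^ j)))"
    by blast
  thus ?thesis unfolding harm_def by (simp add: sum_subtractf)
qed

end

context pp begin

lemma refl_sum: "(\<Sum>k=1..p-1. f k) = (\<Sum>k=1..p-1. f (p - k))"
proof -
  have "(\<Sum>k=1..p-1. f k) = (\<Sum>k=1..p-1. f (p - 1 + 1 - k))" by (rule sum.atLeastAtMost_rev)
  also have "\<dots> = (\<Sum>k=1..p-1. f (p - k))" using p_gt1 by simp
  finally show ?thesis .
qed

lemma H_refl: "2 * harm (p-1) m = (\<Sum>k=1..p-1. 1/of_nat k^m + 1/of_nat (p-k)^m)"
proof -
  have "(\<Sum>k=1..p-1. 1/of_nat k^m) = (\<Sum>k=1..p-1. 1/(of_nat (p-k)::rat)^m)" by (rule refl_sum)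
  thus ?thesis unfolding harm_def sum.distrib by simp
qed

lemma half_pint: "p \<ge> 7 \<Longrightarrow> pint (1/2)"
  using pint_inv_nat[of 2] by simp

lemma id1: "(x::rat) \<noteq> 0 \<Longrightarrow> P - x \<noteq> 0 \<Longrightarrow> 1/x + 1/(P-x) + P/x^2 + P^2/x^3 + P^3/x^4 = P^4 * ((1/x^4)/(P-x))"
  by (simp add: field_simps power_eq_if)
lemma id3: "(x::rat) \<noteq> 0 \<Longrightarrow> P - x \<noteq> 0 \<Longrightarrow> 1/x^3 + 1/(P-x)^3 + 3*P/x^4 = P^2 * ((3*P^2 - 8*P*x + 6*x^2) * ((1/x^4)/(P-x)^3))"
  by (simp add: divide_simps) (simp add: power_eq_if algebra_simps)

lemma term1: assumes k: "k \<in> {1..p-1}"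
  shows "Dv 4 (1/of_nat k + 1/of_nat (p-k) + of_nat p/of_nat k^2 + of_nat p^2/of_nat k^3 + of_nat p^3/of_nat k^4)"
proof -
  have kp: "0 < k" "k < p" "0 < p - k" "p - k < p" using k p_gt1 by auto
  have e: "(of_nat (p-k)::rat) = of_nat p - of_nat k" using kp by (simp add: of_nat_diff)
  have eq: "(1/of_nat k + 1/of_nat (p-k) + of_nat p/of_nat k^2 + of_nat p^2/of_nat k^3 + of_nat p^3/of_nat k^4 :: rat)
     = of_nat p^4 * ((1 / of_nat k ^ 4) / of_nat (p - k))"
    unfolding e by (rule id1) (use kp in auto)
  have "Dv 4 (of_nat p^4 * ((1 / of_nat k ^ 4) / of_nat (p - k)))"
    using kp by (intro Dv_mult_pint' Dv_pow_p pint_div_nat pint_div_nat_pow) auto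
  thus ?thesis using eq by simp
qed

lemma term3: assumes k: "k \<in> {1..p-1}"
  shows "Dv 2 (1/of_nat k^3 + 1/of_nat (p-k)^3 + 3 * of_nat p/of_nat k^4)"
proof -
  have kp: "0 < k" "k < p" "0 < p - k" "p - k < p" using k p_gt1 by auto
  have e: "(of_nat (p-k)::rat) = of_nat p - of_nat k" using kp by (simp add: of_nat_diff)
  define X where "X = (3*of_nat p^2 - 8*of_nat p*of_nat k + 6*of_nat k^2) * ((1 / of_nat k ^ 4) / (of_nat (p - k)::rat) ^ 3)"
  have eq: "(1/of_nat k^3 + 1/of_nat (p-k)^3 + 3 * of_nat p/of_nat k^4 :: rat) = of_nat p^2 * X"
    unfolding e X_def by (rule id3) (use kp in auto)
  have "pint X" unfolding X_def using kp
    by (intro pint_mult pint_div_nat_pow pint_diff pint_add) auto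
  hence "Dv 2 (of_nat p^2 * X)" by (intro Dv_mult_pint' Dv_pow_p)
  thus ?thesis using eq by simp
qed

lemma H4_Dv1: "p \<ge> 7 \<Longrightarrow> Dv 1 (harm (p-1) 4)" by (rule harm_Dv1) auto
lemma H2_Dv1: "p \<ge> 7 \<Longrightarrow> Dv 1 (harm (p-1) 2)" by (rule harm_Dv1) auto

lemma Dv_p_mult: "Dv e x \<Longrightarrow> Dv (f + e) (of_nat p ^ f * x)"
  using Dv_mult[OF Dv_pow_p] .

lemma H3_Dv2: assumes "p \<ge> 7" shows "Dv 2 (harm (p-1) 3)"
proof -
  have "Dv 2 (\<Sum>k=1..p-1. 1/of_nat k^3 + 1/of_nat (p-k)^3 + 3 * of_nat p/of_nat k^4)"
    using term3 by blast
  also have "(\<Sum>k=1..p-1. 1/of_nat k^3 + 1/of_nat (p-k)^3 + 3 * of_nat p/of_nat k^4)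
     = 2 * harm (p-1) 3 + 3 * (of_nat p ^ 1 * harm (p-1) 4)"
    unfolding H_refl sum.distrib by (simp add: harm_def sum_distrib_left)
  finally have a: "Dv 2 (2 * harm (p-1) 3 + 3 * (of_nat p ^ 1 * harm (p-1) 4))" .
  have b: "Dv 2 (3 * (of_nat p ^ 1 * harm (p-1) 4))"
    using Dv_mult_pint[OF Dv_p_mult[OF H4_Dv1[OF assms], of 1], of 3] by (simp add: numeral_2_eq_2)
  have "Dv 2 ((1/2) * ((2 * harm (p-1) 3 + 3 * (of_nat p ^ 1 * harm (p-1) 4)) - 3 * (of_nat p ^ 1 * harm (p-1) 4)))"
    using a b half_pint[OF assms] by blast
  thus ?thesis by simp
qed

lemma H1_main: assumes "p \<ge> 7" shows "Dv 4 (harm (p-1) 1 + of_nat p / 2 * harm (p-1) 2)"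
proof -
  have "Dv 4 (\<Sum>k=1..p-1. 1/of_nat k + 1/of_nat (p-k) + of_nat p/of_nat k^2 + of_nat p^2/of_nat k^3 + of_nat p^3/of_nat k^4)"
    using term1 by blast
  also have "(\<Sum>k=1..p-1. 1/of_nat k + 1/of_nat (p-k) + of_nat p/of_nat k^2 + of_nat p^2/of_nat k^3 + of_nat p^3/of_nat k^4)
     = 2 * harm (p-1) 1 + of_nat p * harm (p-1) 2 + of_nat p^2 * harm (p-1) 3 + of_nat p^3 * harm (p-1) 4"
    using H_refl[of 1] by (simp add: sum.distrib harm_def sum_distrib_left)
  finally have a: "Dv 4 (2 * harm (p-1) 1 + of_nat p * harm (p-1) 2 + of_nat p^2 * harm (p-1) 3 + of_nat p^3 * harm (p-1) 4)" .
  have b: "Dv 4 (of_nat p^2 * harm (p-1) 3)" using Dv_p_mult[OF H3_Dv2[OF assms], of 2] by simp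
  have c: "Dv 4 (of_nat p^3 * harm (p-1) 4)" using Dv_p_mult[OF H4_Dv1[OF assms], of 3] by simp
  have "Dv 4 ((1/2) * ((2 * harm (p-1) 1 + of_nat p * harm (p-1) 2 + of_nat p^2 * harm (p-1) 3 + of_nat p^3 * harm (p-1) 4) - of_nat p^2 * harm (p-1) 3 - of_nat p^3 * harm (p-1) 4))"
    using a b c half_pint[OF assms] by blast
  thus ?thesis by (simp add: field_simps)
qed

lemma H1_Dv2: assumes "p \<ge> 7" shows "Dv 2 (harm (p-1) 1)"
proof -
  have a: "Dv 2 (harm (p-1) 1 + of_nat p / 2 * harm (p-1) 2)" using Dv_mono[OF _ H1_main[OF assms]] by simp
  have "Dv 2 ((1/2) * (of_nat p ^ 1 * harm (p-1) 2))"
    using Dv_mult_pint[OF Dv_p_mult[OF H2_Dv1[OF assms], of 1] half_pint[OF assms]] by (simp add: numeral_2_eq_2)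
  hence "Dv 2 ((harm (p-1) 1 + of_nat p / 2 * harm (p-1) 2) - (1/2) * (of_nat p ^ 1 * harm (p-1) 2))"
    using a by blast
  thus ?thesis by simp
qed

end


lemma harm_0[simp]: "harm 0 m = 0" unfolding harm_def by simp
lemma harm_Suc: "harm (Suc n) m = harm n m + (1 / of_nat (Suc n))^m"
  unfolding harm_def by (simp add: power_one_over)

lemma sum_Suc1: "(\<Sum>k=1..Suc n. f k) = (\<Sum>k=1..n. f k) + (f (Suc n) :: rat)"
  by simp

lemma harm_Suc_x: "x = 1 / of_nat (Suc n) \<Longrightarrow> harm (Suc n) m = harm n m + x^m"
  by (simp add: harm_Suc)

lemma I1: "(\<Sum>k=1..n. harm k 1 / of_nat k) = (harm n 1 ^2 + harm n 2)/2"
proof (induction n)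
  case (Suc n)
  obtain x where x: "x = 1 / (of_nat (Suc n) :: rat)" by blast
  have a: "harm (Suc n) 1 / of_nat (Suc n) = (harm n 1 + x) * x" unfolding harm_Suc_x[OF x] x by (simp add: divide_simps)
  have "(\<Sum>k=1..Suc n. harm k 1 / of_nat k) = (harm n 1 ^2 + harm n 2)/2 + (harm n 1 + x) * x"
    unfolding sum_Suc1 Suc a by simp
  also have "\<dots> = (harm (Suc n) 1 ^2 + harm (Suc n) 2)/2"
    unfolding harm_Suc_x[OF x] by (simp add: field_simps power2_eq_square)
  finally show ?case .
qed simp

lemma I2: "(\<Sum>k=1..n. harm k 2 / of_nat k) + (\<Sum>k=1..n. harm k 1 / of_nat k^2) = harm n 1 * harm n 2 + harm n 3"
proof (induction n)
  case (Suc n)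
  obtain x where x: "x = 1 / (of_nat (Suc n) :: rat)" by blast
  have a: "harm (Suc n) 2 / of_nat (Suc n) = (harm n 2 + x^2) * x" unfolding harm_Suc_x[OF x] x by (simp add: divide_simps)
  have b: "harm (Suc n) 1 / of_nat (Suc n)^2 = (harm n 1 + x) * x^2" unfolding harm_Suc_x[OF x] x by (simp add: divide_simps)
  have "(\<Sum>k=1..Suc n. harm k 2 / of_nat k) + (\<Sum>k=1..Suc n. harm k 1 / of_nat k^2)
     = ((\<Sum>k=1..n. harm k 2 / of_nat k) + (\<Sum>k=1..n. harm k 1 / of_nat k^2)) + (harm n 2 + x^2) * x + (harm n 1 + x) * x^2"
    unfolding sum_Suc1 a b by simp
  also have "\<dots> = harm (Suc n) 1 * harm (Suc n) 2 + harm (Suc n) 3"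
    unfolding Suc harm_Suc_x[OF x] by (simp add: algebra_simps power_eq_if)
  finally show ?case .
qed simp

lemma I3: "3 * (\<Sum>k=1..n. harm k 1^2 / of_nat k) - 3 * (\<Sum>k=1..n. harm k 1 / of_nat k^2) + harm n 3 = harm n 1 ^ 3"
proof (induction n)
  case (Suc n)
  obtain x where x: "x = 1 / (of_nat (Suc n) :: rat)" by blast
  have a: "harm (Suc n) 1^2 / of_nat (Suc n) = (harm n 1 + x)^2 * x" unfolding harm_Suc_x[OF x] x by (simp add: divide_simps)
  have b: "harm (Suc n) 1 / of_nat (Suc n)^2 = (harm n 1 + x) * x^2" unfolding harm_Suc_x[OF x] x by (simp add: divide_simps)
  have "3 * (\<Sum>k=1..Suc n. harm k 1^2 / of_nat k) - 3 * (\<Sum>k=1..Suc n. harm k 1 / of_nat k^2) + harm (Suc n) 3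
     = (3 * (\<Sum>k=1..n. harm k 1^2 / of_nat k) - 3 * (\<Sum>k=1..n. harm k 1 / of_nat k^2) + harm n 3)
       + 3 * ((harm n 1 + x)^2 * x) - 3 * ((harm n 1 + x) * x^2) + x^3"
    unfolding sum_Suc1 a b harm_Suc_x[OF x, of 3] by (simp add: algebra_simps)
  also have "\<dots> = harm (Suc n) 1 ^ 3"
    unfolding Suc harm_Suc_x[OF x] by (simp add: algebra_simps power_eq_if)
  finally show ?case .
qed simp

lemma I5: "(\<Sum>k=1..n. harm k 2 / of_nat k^2) = (harm n 2^2 + harm n 4)/2"
proof (induction n)
  case (Suc n)
  obtain x where x: "x = 1 / (of_nat (Suc n) :: rat)" by blast
  have a: "harm (Suc n) 2 / of_nat (Suc n)^2 = (harm n 2 + x^2) * x^2" unfolding harm_Suc_x[OF x] x by (simp add: divide_simps)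
  have "(\<Sum>k=1..Suc n. harm k 2 / of_nat k^2) = (harm n 2^2 + harm n 4)/2 + (harm n 2 + x^2) * x^2"
    unfolding sum_Suc1 Suc a by simp
  also have "\<dots> = (harm (Suc n) 2^2 + harm (Suc n) 4)/2"
    unfolding harm_Suc_x[OF x] by (simp add: field_simps power_eq_if)
  finally show ?case .
qed simp

definition T :: "(nat \<Rightarrow> rat) \<Rightarrow> nat \<Rightarrow> rat" where
  "T f n = (\<Sum>i<n. (-1)^i * of_nat (n choose Suc i) * f (Suc i))"

lemma Tstep: "T f (Suc n) = T f n + (\<Sum>i\<le>n. (-1)^i * of_nat (n choose i) * f (Suc i))"
proof -
  have "T f (Suc n) = (\<Sum>i<Suc n. (-1)^i * of_nat (n choose i) * f (Suc i))
      + (\<Sum>i<Suc n. (-1)^i * of_nat (n choose Suc i) * f (Suc i))"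
    unfolding T_def by (simp add: sum.distrib algebra_simps)
  also have "(\<Sum>i<Suc n. (-1)^i * of_nat (n choose Suc i) * f (Suc i)) = T f n"
    unfolding T_def by simp
  finally show ?thesis by (simp add: lessThan_Suc_atMost add.commute)
qed

lemma T1: "T (\<lambda>_. 1) n = (if n = 0 then 0 else 1)"
proof (induction n)
  case 0 then show ?case by (simp add: T_def)
next
  case (Suc n)
  show ?case
  proof (cases "n = 0")
    case True thus ?thesis by (simp add: T_def)
  next
    case False
    have "(\<Sum>i\<le>n. (-1)^i * of_nat (n choose i) * (1::rat)) = 0"
      using choose_alternating_sum[of n] False by simp
    thus ?thesis using Suc False by (simp add: Tstep)
  qed
qed

lemma Tdiv_aux: "(\<Sum>i\<le>n. (-1)^i * of_nat (n choose i) * (g (Suc i) / of_nat (Suc i))) = T g (Suc n) / of_nat (Suc n)"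
proof -
  have "(-1)^i * of_nat (n choose i) * (g (Suc i) / of_nat (Suc i)) =
        (-1)^i * of_nat (Suc n choose Suc i) * g (Suc i) / of_nat (Suc n)" for i
  proof -
    have eq: "of_nat (Suc n) * of_nat (n choose i) = (of_nat (Suc n choose Suc i) * of_nat (Suc i) :: rat)"
      using Suc_times_binomial_eq[of n i] by (metis of_nat_mult)
    have e: "of_nat (n choose i) / of_nat (Suc i) = (of_nat (Suc n choose Suc i) / of_nat (Suc n) :: rat)"
      using eq by (simp add: divide_simps del: binomial_Suc_Suc of_nat_Suc) (simp add: algebra_simps del: binomial_Suc_Suc of_nat_Suc)
    have "(-1)^i * of_nat (n choose i) * (g (Suc i) / of_nat (Suc i)) = (-1)^i * g (Suc i) * (of_nat (n choose i) / of_nat (Suc i))"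
      by simp
    also have "\<dots> = (-1)^i * g (Suc i) * (of_nat (Suc n choose Suc i) / of_nat (Suc n))" by (simp only: e)
    finally show ?thesis by simp
  qed
  hence "(\<Sum>i\<le>n. (-1)^i * of_nat (n choose i) * (g (Suc i) / of_nat (Suc i))) =
     (\<Sum>i<Suc n. (-1)^i * of_nat (Suc n choose Suc i) * g (Suc i) / of_nat (Suc n))"
    by (simp add: lessThan_Suc_atMost)
  also have "\<dots> = T g (Suc n) / of_nat (Suc n)" by (simp only: T_def sum_divide_distrib)
  finally show ?thesis .
qed

lemma Tdiv: "T (\<lambda>k. f k / of_nat k) n = (\<Sum>m=1..n. T f m / of_nat m)"
proof (induction n)
  case 0 then show ?case by (simp add: T_def)
next
  case (Suc n)
  have "T (\<lambda>k. f k / of_nat k) (Suc n) = T (\<lambda>k. f k / of_nat k) n + T f (Suc n) / of_nat (Suc n)"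
    using Tstep[of "\<lambda>k. f k / of_nat k" n] Tdiv_aux[of n f] by simp
  then show ?case using Suc by simp
qed

lemma TH: "T (\<lambda>k. harm k 1) n = (if n = 0 then 0 else 1 / of_nat n)"
proof (cases n)
  case 0 then show ?thesis by (simp add: T_def)
next
  case (Suc m)
  have s: "(\<Sum>i\<le>m. (-1)^i * of_nat (m choose i) * harm i 1) = - T (\<lambda>k. harm k 1) m"
  proof (cases m)
    case 0 then show ?thesis by (simp add: T_def)
  next
    case (Suc q)
    have "(\<Sum>i\<le>m. (-1)^i * of_nat (m choose i) * harm i 1) = (\<Sum>i\<le>q. (-1)^(Suc i) * of_nat (m choose Suc i) * harm (Suc i) 1)"
      unfolding Suc sum.atMost_Suc_shift by simp
    also have "\<dots> = - T (\<lambda>k. harm k 1) m" unfolding T_def Suc lessThan_Suc_atMost[symmetric]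
      by (simp add: sum_negf[symmetric])
    finally show ?thesis .
  qed
  have "T (\<lambda>k. harm k 1) (Suc m) = T (\<lambda>k. harm k 1) m
     + (\<Sum>i\<le>m. (-1)^i * of_nat (m choose i) * harm i 1) + (\<Sum>i\<le>m. (-1)^i * of_nat (m choose i) * ((\<lambda>_. 1) (Suc i) / of_nat (Suc i)))"
    unfolding Tstep harm_Suc by (simp add: algebra_simps sum.distrib)
  also have "\<dots> = 1 / of_nat (Suc m)" using Tdiv_aux[of m "\<lambda>_. 1"] T1[of "Suc m"] s by simp
  finally show ?thesis using Suc by simp
qed

lemma T_inv1: "T (\<lambda>k. 1 / of_nat k) n = harm n 1"
proof -
  have "T (\<lambda>k. 1 / of_nat k) n = (\<Sum>m=1..n. T (\<lambda>_. 1) m / of_nat m)" using Tdiv[of "\<lambda>_. 1" n] by simp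
  also have "\<dots> = (\<Sum>m=1..n. 1 / of_nat m ^ 1)" by (rule sum.cong) (auto simp: T1)
  finally show ?thesis unfolding harm_def .
qed

lemma T_inv2: "T (\<lambda>k. 1 / of_nat k^2) n = (\<Sum>m=1..n. harm m 1 / of_nat m)"
proof -
  have "(\<lambda>k. 1 / (of_nat k::rat)^2) = (\<lambda>k. (1 / of_nat k) / of_nat k)" by (simp add: power2_eq_square)
  hence "T (\<lambda>k. 1 / of_nat k^2) n = (\<Sum>m=1..n. T (\<lambda>k. 1 / of_nat k) m / of_nat m)"
    using Tdiv[of "\<lambda>k. 1 / of_nat k" n] by simp
  thus ?thesis unfolding T_inv1 .
qed

lemma T_H1: "T (\<lambda>k. harm k 1 / of_nat k) n = harm n 2"
proof -
  have "T (\<lambda>k. harm k 1 / of_nat k) n = (\<Sum>m=1..n. T (\<lambda>k. harm k 1) m / of_nat m)" by (rule Tdiv)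
  also have "\<dots> = (\<Sum>m=1..n. 1 / of_nat m ^ 2)" by (rule sum.cong) (auto simp: TH[simplified] power2_eq_square)
  finally show ?thesis unfolding harm_def .
qed

lemma T_H2: "T (\<lambda>k. harm k 1 / of_nat k^2) n = (\<Sum>m=1..n. harm m 2 / of_nat m)"
proof -
  have "(\<lambda>k. harm k 1 / (of_nat k::rat)^2) = (\<lambda>k. (harm k 1 / of_nat k) / of_nat k)" by (simp add: power2_eq_square)
  hence "T (\<lambda>k. harm k 1 / of_nat k^2) n = (\<Sum>m=1..n. T (\<lambda>k. harm k 1 / of_nat k) m / of_nat m)"
    using Tdiv[of "\<lambda>k. harm k 1 / of_nat k" n] by simp
  thus ?thesis unfolding T_H1 .
qed

lemma sum_shift1: "(\<Sum>k=1..N. g k) = (\<Sum>i<N. g (Suc i) :: rat)"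
  by (induction N) simp_all


context pp begin

definition P :: "nat \<Rightarrow> rat" where "P k = (\<Prod>j=1..k. 1 - of_nat p / of_nat j)"

lemma P_Suc: "P (Suc k) = P k * (1 - of_nat p / of_nat (Suc k))"
  unfolding P_def by simp

lemma binP: "(-1)^k * of_nat ((p-1) choose k) = P k"
proof (induction k)
  case 0 then show ?case by (simp add: P_def)
next
  case (Suc k)
  define N where "N = p - 1"
  have Np: "(of_nat N :: rat) = of_nat p - 1" unfolding N_def using p_gt1 by (simp add: of_nat_diff)
  have g: "of_nat N * (of_nat N gchoose k) = of_nat k * (of_nat N gchoose k) + of_nat (Suc k) * ((of_nat N :: rat) gchoose (Suc k))"
    by (rule gbinomial_mult_1)
  have "of_nat (Suc k) * (of_nat (N choose Suc k) :: rat) = (of_nat N - of_nat k) * of_nat (N choose k)"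
    using g unfolding binomial_gbinomial by (simp add: algebra_simps)
  hence c: "(of_nat (N choose Suc k) :: rat) = (of_nat N - of_nat k) * of_nat (N choose k) / of_nat (Suc k)"
    by (simp add: field_simps del: of_nat_Suc)
  have "(-1)^(Suc k) * (of_nat (N choose Suc k) :: rat) = ((-1)^k * of_nat (N choose k)) * ((of_nat k - of_nat N) / of_nat (Suc k))"
    unfolding c by (simp add: algebra_simps)
  also have "(of_nat k - of_nat N) / of_nat (Suc k) = 1 - of_nat p / (of_nat (Suc k) :: rat)"
    unfolding Np by (simp add: field_simps)
  finally show ?case using Suc unfolding N_def P_Suc by simp
qed

lemma T_pm1: "T f (p-1) = - (\<Sum>k=1..p-1. P k * f k)"
proof -
  have "T f (p-1) = (\<Sum>i<p-1. - (P (Suc i) * f (Suc i)))"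
    unfolding T_def binP[symmetric] by (rule sum.cong) auto
  also have "\<dots> = - (\<Sum>k=1..p-1. P k * f k)" using sum_shift1[of "\<lambda>k. P k * f k" "p-1"] by (simp add: sum_negf)
  finally show ?thesis .
qed

lemma pint_harm: "k < p \<Longrightarrow> pint (harm k m)"
  unfolding harm_def by (intro pint_sum) (auto intro!: pint_div_nat_pow)

definition E :: "nat \<Rightarrow> rat" where "E k = (harm k 1^2 - harm k 2) / 2"

lemma pint_E: "p \<ge> 7 \<Longrightarrow> k < p \<Longrightarrow> pint (E k)"
proof -
  assume a: "p \<ge> 7" "k < p"
  have "pint ((1/2) * (harm k 1^2 - harm k 2))" using half_pint[OF a(1)] pint_harm[OF a(2)]
    by (intro pint_mult pint_diff pint_power) auto
  thus ?thesis unfolding E_def by simp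
qed

lemma E_Suc: "x = 1 / of_nat (Suc k) \<Longrightarrow> E (Suc k) = E k + harm k 1 * x"
  unfolding E_def using harm_Suc_x[of x k] by (simp add: field_simps power2_eq_square)

lemma Pexp: assumes "p \<ge> 7" shows "k \<le> p - 1 \<Longrightarrow> Dv 3 (P k - (1 - of_nat p * harm k 1 + of_nat p^2 * E k))"
proof (induction k)
  case 0 then show ?case by (simp add: P_def E_def)
next
  case (Suc k)
  obtain x where x: "x = 1 / (of_nat (Suc k) :: rat)" by blast
  have kp: "Suc k < p" using Suc.prems p_gt1 by linarith
  have eq: "P (Suc k) - (1 - of_nat p * harm (Suc k) 1 + of_nat p^2 * E (Suc k))
      = (P k - (1 - of_nat p * harm k 1 + of_nat p^2 * E k)) * (1 - of_nat p * x) - of_nat p ^ 3 * (E k * x)"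
    unfolding P_Suc E_Suc[OF x] harm_Suc_x[OF x] using x by (simp add: algebra_simps power2_eq_square power3_eq_cube)
  have "pint x" unfolding x using kp pint_inv_nat[of "Suc k"] by simp
  have "pint (E k)" using pint_E[OF assms] kp by simp
  have "Dv 3 ((P k - (1 - of_nat p * harm k 1 + of_nat p^2 * E k)) * (1 - of_nat p * x) - of_nat p ^ 3 * (E k * x))"
  proof (rule Dv_diff)
    show "Dv 3 ((P k - (1 - of_nat p * harm k 1 + of_nat p^2 * E k)) * (1 - of_nat p * x))"
      using Suc kp \<open>pint x\<close> by (intro Dv_mult_pint' pint_diff pint_mult) auto
    show "Dv 3 (of_nat p ^ 3 * (E k * x))"
      using \<open>pint x\<close> \<open>pint (E k)\<close> by (intro Dv_mult_pint' Dv_pow_p) auto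
  qed
  thus ?case using eq by simp
qed

lemma Pexp2: assumes "p \<ge> 7" "k \<le> p - 1" shows "Dv 2 (P k - (1 - of_nat p * harm k 1))"
proof -
  have kp: "k < p" using assms p_gt1 by linarith
  have a: "Dv 2 (P k - (1 - of_nat p * harm k 1 + of_nat p^2 * E k))" using Dv_mono[OF _ Pexp[OF assms]] by simp
  have "Dv 2 (of_nat p^2 * E k)" using pint_E[OF assms(1) kp] by (intro Dv_mult_pint' Dv_pow_p)
  hence "Dv 2 ((P k - (1 - of_nat p * harm k 1 + of_nat p^2 * E k)) + of_nat p^2 * E k)" using a by blast
  also have "(P k - (1 - of_nat p * harm k 1 + of_nat p^2 * E k)) + of_nat p^2 * E k = P k - (1 - of_nat p * harm k 1)"
    by simp
  finally show ?thesis .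
qed

end

context pp begin

lemma Tq_Dv1: assumes p7: "p \<ge> 7" shows "Dv 1 (\<Sum>k=1..p-1. harm k 1^2 / of_nat k^2)"
proof -
  have e: "- (\<Sum>k=1..p-1. P k * (harm k 1 / of_nat k^2)) = (\<Sum>m=1..p-1. harm m 2 / of_nat m)"
    using T_pm1[of "\<lambda>k. harm k 1 / of_nat k^2"] T_H2[of "p-1"] by simp
  have e2: "(\<Sum>k=1..p-1. P k * (harm k 1 / of_nat k^2)) = (\<Sum>k=1..p-1. harm k 1 / of_nat k^2) - harm (p-1) 1 * harm (p-1) 2 - harm (p-1) 3"
    using e I2[of "p-1"] by (simp add: algebra_simps)
  have "Dv 2 (\<Sum>k=1..p-1. (P k - (1 - of_nat p * harm k 1)) * (harm k 1 / of_nat k^2))"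
  proof (intro Dv_sum)
    fix k assume k: "k \<in> {1..p-1}"
    hence kp: "0 < k" "k < p" "k \<le> p - 1" by auto
    show "Dv 2 ((P k - (1 - of_nat p * harm k 1)) * (harm k 1 / of_nat k^2))"
      using Pexp2[OF p7 kp(3)] pint_harm[OF kp(2)] kp by (intro Dv_mult_pint') auto
  qed
  also have "(\<Sum>k=1..p-1. (P k - (1 - of_nat p * harm k 1)) * (harm k 1 / of_nat k^2))
      = (\<Sum>k=1..p-1. P k * (harm k 1 / of_nat k^2)) - (\<Sum>k=1..p-1. harm k 1 / of_nat k^2)
         + of_nat p * (\<Sum>k=1..p-1. harm k 1^2 / of_nat k^2)"
    by (simp add: algebra_simps sum_subtractf sum.distrib sum_distrib_left power2_eq_square)
  also have "\<dots> = of_nat p * (\<Sum>k=1..p-1. harm k 1^2 / of_nat k^2) - harm (p-1) 1 * harm (p-1) 2 - harm (p-1) 3"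
    unfolding e2 by simp
  finally have a: "Dv 2 (of_nat p * (\<Sum>k=1..p-1. harm k 1^2 / of_nat k^2) - harm (p-1) 1 * harm (p-1) 2 - harm (p-1) 3)" .
  have b: "Dv 2 (harm (p-1) 1 * harm (p-1) 2)" using H1_Dv2[OF p7] pint_harm[of "p-1" 2] p_gt1
    by (intro Dv_mult_pint') auto
  have "Dv 2 ((of_nat p * (\<Sum>k=1..p-1. harm k 1^2 / of_nat k^2) - harm (p-1) 1 * harm (p-1) 2 - harm (p-1) 3)
     + harm (p-1) 1 * harm (p-1) 2 + harm (p-1) 3)" using a b H3_Dv2[OF p7] by blast
  hence "Dv (1 + 1) (of_nat p ^ 1 * (\<Sum>k=1..p-1. harm k 1^2 / of_nat k^2))" by (simp add: numeral_2_eq_2)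
  from Dv_div_p[OF this] show ?thesis using pnz by simp
qed

lemma A_main: assumes p7: "p \<ge> 7"
  shows "Dv 3 (of_nat p * (\<Sum>k=1..p-1. harm k 1 / of_nat k^2) - 3/2 * harm (p-1) 2)"
proof -
  have e: "- (\<Sum>k=1..p-1. P k * (1 / of_nat k^2)) = (harm (p-1) 1^2 + harm (p-1) 2) / 2"
    using T_pm1[of "\<lambda>k. 1 / of_nat k^2"] T_inv2[of "p-1"] I1[of "p-1"] by simp
  have "Dv 3 (\<Sum>k=1..p-1. (P k - (1 - of_nat p * harm k 1 + of_nat p^2 * E k)) * (1 / of_nat k^2))"
  proof (intro Dv_sum)
    fix k assume k: "k \<in> {1..p-1}"
    hence kp: "0 < k" "k < p" "k \<le> p - 1" by auto
    show "Dv 3 ((P k - (1 - of_nat p * harm k 1 + of_nat p^2 * E k)) * (1 / of_nat k^2))"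
      using Pexp[OF p7 kp(3)] kp by (intro Dv_mult_pint') auto
  qed
  also have "(\<Sum>k=1..p-1. (P k - (1 - of_nat p * harm k 1 + of_nat p^2 * E k)) * (1 / of_nat k^2))
     = (\<Sum>k=1..p-1. P k * (1 / of_nat k^2)) - harm (p-1) 2 + of_nat p * (\<Sum>k=1..p-1. harm k 1 / of_nat k^2)
       - of_nat p^2 * (\<Sum>k=1..p-1. E k / of_nat k^2)"
    unfolding harm_def[of "p-1" 2]
    by (simp add: algebra_simps sum_subtractf sum.distrib sum_distrib_left)
  finally have a: "Dv 3 ((\<Sum>k=1..p-1. P k * (1 / of_nat k^2)) - harm (p-1) 2 + of_nat p * (\<Sum>k=1..p-1. harm k 1 / of_nat k^2)
       - of_nat p^2 * (\<Sum>k=1..p-1. E k / of_nat k^2))" .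
  have SE: "(\<Sum>k=1..p-1. E k / of_nat k^2) = ((\<Sum>k=1..p-1. harm k 1^2 / of_nat k^2) - (harm (p-1) 2^2 + harm (p-1) 4)/2) / 2"
  proof -
    have "(\<Sum>k=1..p-1. E k / of_nat k^2) = (\<Sum>k=1..p-1. (harm k 1^2 / of_nat k^2 - harm k 2 / of_nat k^2) / 2)"
      by (rule sum.cong) (simp_all add: E_def diff_divide_distrib)
    also have "\<dots> = (\<Sum>k=1..p-1. harm k 1^2 / of_nat k^2 - harm k 2 / of_nat k^2) / 2"
      by (rule sum_divide_distrib[symmetric])
    also have "\<dots> = ((\<Sum>k=1..p-1. harm k 1^2 / of_nat k^2) - (\<Sum>k=1..p-1. harm k 2 / of_nat k^2)) / 2"
      by (simp only: sum_subtractf)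
    finally show ?thesis unfolding I5 .
  qed
  have h2: "pint (1/2)" using half_pint[OF p7] .
  have "Dv 1 (harm (p-1) 2^2)" using Dv_mono[OF _ Dv_mult[OF H2_Dv1[OF p7] H2_Dv1[OF p7]]] by (simp add: power2_eq_square)
  hence "Dv 1 ((1/2) * ((\<Sum>k=1..p-1. harm k 1^2 / of_nat k^2) - (1/2) * (harm (p-1) 2^2 + harm (p-1) 4)))"
    using Tq_Dv1[OF p7] H4_Dv1[OF p7] h2 by (intro Dv_mult_pint Dv_diff Dv_add) auto
  hence "Dv 1 (\<Sum>k=1..p-1. E k / of_nat k^2)" unfolding SE by simp
  hence b: "Dv 3 (of_nat p^2 * (\<Sum>k=1..p-1. E k / of_nat k^2))" using Dv_p_mult[of 1 _ 2] by simp
  have "Dv 4 (harm (p-1) 1 * harm (p-1) 1)" using Dv_mult[OF H1_Dv2[OF p7] H1_Dv2[OF p7]] by simp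
  hence "Dv 3 (harm (p-1) 1 * harm (p-1) 1)" using Dv_mono[of 3 4] by simp
  hence "Dv 3 ((1/2) * (harm (p-1) 1 * harm (p-1) 1))" using h2 by (rule Dv_mult_pint)
  hence c: "Dv 3 ((1/2) * harm (p-1) 1^2)" by (simp add: power2_eq_square)
  have "Dv 3 (((\<Sum>k=1..p-1. P k * (1 / of_nat k^2)) - harm (p-1) 2 + of_nat p * (\<Sum>k=1..p-1. harm k 1 / of_nat k^2)
       - of_nat p^2 * (\<Sum>k=1..p-1. E k / of_nat k^2)) + (1/2) * harm (p-1) 1^2 + of_nat p^2 * (\<Sum>k=1..p-1. E k / of_nat k^2))"
    using a b c by blast
  also have "((\<Sum>k=1..p-1. P k * (1 / of_nat k^2)) - harm (p-1) 2 + of_nat p * (\<Sum>k=1..p-1. harm k 1 / of_nat k^2)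
       - of_nat p^2 * (\<Sum>k=1..p-1. E k / of_nat k^2)) + (1/2) * harm (p-1) 1^2 + of_nat p^2 * (\<Sum>k=1..p-1. E k / of_nat k^2)
       = of_nat p * (\<Sum>k=1..p-1. harm k 1 / of_nat k^2) - 3/2 * harm (p-1) 2"
    using e by (simp add: field_simps)
  finally show ?thesis .
qed

end


theorem theorem1p1:
  fixes p :: nat
  assumes "prime p" and "p \<ge> 7"
  shows "rat_cong (\<Sum>k=1..p-1. harm k 1 / (of_nat k)^2) (\<Sum>k=1..p-1. (harm k 1)^2 / of_nat k) p 2
       \<and> rat_cong (\<Sum>k=1..p-1. (harm k 1)^2 / of_nat k) (- 3 / (of_nat p)^2 * harm (p-1) 1) p 2
       \<and> rat_cong (- 3 / (of_nat p)^2 * harm (p-1) 1) (3 / (2 * of_nat p) * harm (p-1) 2) p 2"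
proof -
  interpret pp p using assms(1) by unfold_locales
  have p7: "p \<ge> 7" by fact
  have pnz': "(of_nat p :: rat) \<noteq> 0" using pnz .
  have "Dv (2 + 1) (of_nat p * (\<Sum>k=1..p-1. harm k 1 / of_nat k^2) - 3/2 * harm (p-1) 2)"
    using A_main[OF p7] by simp
  from Dv_div_p[OF this] have "Dv 2 ((of_nat p * (\<Sum>k=1..p-1. harm k 1 / of_nat k^2) - 3/2 * harm (p-1) 2) / of_nat p)"
    by simp
  also have "(of_nat p * (\<Sum>k=1..p-1. harm k 1 / of_nat k^2) - 3/2 * harm (p-1) 2) / of_nat p
     = (\<Sum>k=1..p-1. harm k 1 / of_nat k^2) - 3 / (2 * of_nat p) * harm (p-1) 2"
    using pnz' by (simp add: field_simps)
  finally have A2: "Dv 2 ((\<Sum>k=1..p-1. harm k 1 / of_nat k^2) - 3 / (2 * of_nat p) * harm (p-1) 2)" .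
  have h3: "pint (1/3)" using pint_inv_nat[of 3] p7 by simp
  have "Dv (2 + 0) (harm (p-1) 1 * harm (p-1) 1^2)"
    using H1_Dv2[OF p7] pint_harm[of "p-1" 1] p_gt1 by (intro Dv_mult Dv_pint pint_power) auto
  hence "Dv 2 (harm (p-1) 1 ^ 3)" by (simp add: power3_eq_cube power2_eq_square mult.assoc)
  hence "Dv 2 ((1/3) * (harm (p-1) 3 - harm (p-1) 1 ^ 3))" using H3_Dv2[OF p7] h3 by blast
  also have "(1/3) * (harm (p-1) 3 - harm (p-1) 1 ^ 3) = (\<Sum>k=1..p-1. harm k 1 / of_nat k^2) - (\<Sum>k=1..p-1. harm k 1^2 / of_nat k)"
    using I3[of "p-1"] by (simp add: field_simps)
  finally have AB: "Dv 2 ((\<Sum>k=1..p-1. harm k 1 / of_nat k^2) - (\<Sum>k=1..p-1. harm k 1^2 / of_nat k))" .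
  have "Dv (2 + 2) (harm (p-1) 1 + of_nat p / 2 * harm (p-1) 2)" using H1_main[OF p7] by simp
  from Dv_div_p[OF this] have C: "Dv 2 ((harm (p-1) 1 + of_nat p / 2 * harm (p-1) 2) / of_nat p ^ 2)" .
  have "Dv 2 (- ((\<Sum>k=1..p-1. harm k 1 / of_nat k^2) - (\<Sum>k=1..p-1. harm k 1^2 / of_nat k))
      + ((\<Sum>k=1..p-1. harm k 1 / of_nat k^2) - 3 / (2 * of_nat p) * harm (p-1) 2)
      + 3 * ((harm (p-1) 1 + of_nat p / 2 * harm (p-1) 2) / of_nat p ^ 2))"
    using AB A2 C by (intro Dv_add Dv_minus Dv_mult_pint) auto
  also have "- ((\<Sum>k=1..p-1. harm k 1 / of_nat k^2) - (\<Sum>k=1..p-1. harm k 1^2 / of_nat k))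
      + ((\<Sum>k=1..p-1. harm k 1 / of_nat k^2) - 3 / (2 * of_nat p) * harm (p-1) 2)
      + 3 * ((harm (p-1) 1 + of_nat p / 2 * harm (p-1) 2) / of_nat p ^ 2)
     = (\<Sum>k=1..p-1. harm k 1^2 / of_nat k) - (- 3 / (of_nat p)^2 * harm (p-1) 1)"
    using pnz' by (simp add: field_simps power2_eq_square)
  finally have P2: "Dv 2 ((\<Sum>k=1..p-1. harm k 1^2 / of_nat k) - (- 3 / (of_nat p)^2 * harm (p-1) 1))" .
  have "Dv 2 ((-3) * ((harm (p-1) 1 + of_nat p / 2 * harm (p-1) 2) / of_nat p ^ 2))"
    using C by (intro Dv_mult_pint) auto
  also have "(-3) * ((harm (p-1) 1 + of_nat p / 2 * harm (p-1) 2) / of_nat p ^ 2)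
      = (- 3 / (of_nat p)^2 * harm (p-1) 1) - (3 / (2 * of_nat p) * harm (p-1) 2)"
    using pnz' by (simp add: field_simps power2_eq_square)
  finally have P3: "Dv 2 ((- 3 / (of_nat p)^2 * harm (p-1) 1) - (3 / (2 * of_nat p) * harm (p-1) 2))" .
  show ?thesis unfolding rat_cong_iff using AB P2 P3 by simp
qed


end
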